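(* Let $n\ge1$, $k\ge1$, and let $D_{n,k}:B_{n+k}\to B_n$ be the homomorphism of binary De Bruijn digraphs induced by a Boolean function $d_k(x_1,\ldots,x_{k+1})$. Then $D_{n,k}$ has property (D) if and only if $$d_k(x_1,\ldots,x_{k+1})=x_1+h(x_2,\ldots,x_k)+x_{k+1}\pmod 2$$ for some Boolean function $h$ of the $k-1$ variables $x_2,\ldots,x_k$ (a constant when $k=1$).
   Context: $B_m=B_m(2)$ is the binary De Bruijn digraph with vertex set $\{0,1\}^m$ and an edge from $(x_1,\ldots,x_m)$ to $(y_1,\ldots,y_m)$ iff $y_i=x_{i+1}$ for $i=1,\ldots,m-1$. The homomorphism induced by $d_k$ is $D_{n,k}(x_1,\ldots,x_{n+k})=(d_k(x_1,\ldots,x_{k+1}),\ldots,d_k(x_n,\ldots,x_{n+k}))$. A cycle of length $l$ in $B_n$ is a cyclic sequence $[c_1,\ldots,c_l]$ with vertices the windows $(c_j,\ldots,c_{j+n-1})$, indices mod $l$; it is vertex-disjoint if these windows are distinct. Property (D): for every vertex-disjoint cycle $[c_1,\ldots,c_l]$ in $B_n$ and every $w\in\{0,1\}^k$ there is exactly one sequence $(x_1,\ldots,x_{k+l+n-1})$ with $(x_1,\ldots,x_k)=w$ and $d_k(x_j,\ldots,x_{j+k})=c_j$ (index of $c$ mod $l$) for $j=1,\ldots,l+n-1$; and over all $2^k$ choices of $w$ the $2^k l$ words $(x_j,\ldots,x_{j+n+k-1})$, $j=1,\ldots,l$, are pairwise distinct. *)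

theory Defs
  imports Main
begin

(* Binary digits are represented by bool (False = 0, True = 1); addition mod 2 is (\<noteq>).
   Words / sequences are bool lists, 0-indexed.
   A Boolean function d_k of k+1 variables is d :: bool list \<Rightarrow> bool, applied to lists of length k+1. *)

definition cyc_window :: "nat \<Rightarrow> bool list \<Rightarrow> nat \<Rightarrow> bool list" where
  "cyc_window n c j = map (\<lambda>i. c ! ((j + i) mod length c)) [0..<n]"

definition vdisj_cycle :: "nat \<Rightarrow> bool list \<Rightarrow> bool" where
  "vdisj_cycle n c \<longleftrightarrow> length c \<ge> 1 \<and> inj_on (cyc_window n c) {0..<length c}"

definition cyc_lift :: "nat \<Rightarrow> nat \<Rightarrow> (bool list \<Rightarrow> bool) \<Rightarrow> bool list \<Rightarrow> bool list \<Rightarrow> bool list \<Rightarrow> bool" where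
  "cyc_lift n k d c w x \<longleftrightarrow>
     length x = k + length c + n - 1 \<and> take k x = w \<and>
     (\<forall>j < length c + n - 1. d (take (k + 1) (drop j x)) = c ! (j mod length c))"

definition propD :: "nat \<Rightarrow> nat \<Rightarrow> (bool list \<Rightarrow> bool) \<Rightarrow> bool" where
  "propD n k d \<longleftrightarrow>
     (\<forall>c. vdisj_cycle n c \<longrightarrow>
        (\<forall>w. length w = k \<longrightarrow> (\<exists>!x. cyc_lift n k d c w x)) \<and>
        (\<forall>w w' x x' j j'. length w = k \<and> length w' = k \<and>
            cyc_lift n k d c w x \<and> cyc_lift n k d c w' x' \<and>
            j < length c \<and> j' < length c \<and>
            take (n + k) (drop j x) = take (n + k) (drop j' x') \<longrightarrow> w = w' \<and> j = j'))"

end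

theory Submission
  imports Defs
begin

lemma take_Suc_drop: "j + k < length x \<Longrightarrow> take (Suc k) (drop j x) = take k (drop j x) @ [x!(j+k)]"
  by (simp add: take_Suc_conv_app_nth add.commute)

lemma lift_len: "cyc_lift n k d c w x \<Longrightarrow> length x = k + length c + n - 1"
  by (simp add: cyc_lift_def)

lemma lift_con: "cyc_lift n k d c w x \<Longrightarrow> j < length c + n - 1 \<Longrightarrow>
   d (take k (drop j x) @ [x!(j+k)]) = c ! (j mod length c)"
proof -
  assume L: "cyc_lift n k d c w x" and j: "j < length c + n - 1"
  have "j + k < length x" using lift_len[OF L] j by arith
  then have "take (k+1) (drop j x) = take k (drop j x) @ [x!(j+k)]" using take_Suc_drop by simp
  with L j show ?thesis unfolding cyc_lift_def by metis
qed

lemma fwd: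
  assumes rp: "\<forall>u b1 b2. length u = k \<longrightarrow> d (u@[b1]) = d (u@[b2]) \<longrightarrow> b1 = b2"
  and L: "cyc_lift n k d c w x" and L': "cyc_lift n k d c w' x'"
  and ag: "\<forall>p. a \<le> p \<and> p < a+k \<longrightarrow> x!p = x'!p"
  shows "a \<le> p \<Longrightarrow> p < length x \<Longrightarrow> x!p = x'!p"
proof (induction p rule: less_induct)
  case (less p)
  show ?case
  proof (cases "p < a+k")
    case True with less ag show ?thesis by auto
  next
    case False
    define j where "j = p - k"
    have p: "p = j+k" "a \<le> j" using False j_def by auto
    have lx: "length x = k + length c + n - 1" "length x' = k + length c + n - 1"
      using lift_len[OF L] lift_len[OF L'] by auto
    have jl: "j < length c + n - 1" using less.prems lx p by arith
    have eqk: "take k (drop j x) = take k (drop j x')"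
    proof (rule nth_equalityI)
      show "length (take k (drop j x)) = length (take k (drop j x'))" using lx by simp
    next
      fix i assume "i < length (take k (drop j x))"
      then have i: "i < k" by simp
      have "x ! (j+i) = x' ! (j+i)" using less.IH[of "j+i"] i p less.prems by auto
      then show "take k (drop j x) ! i = take k (drop j x') ! i"
        using i p less.prems lx by simp
    qed
    have "d (take k (drop j x) @ [x!p]) = d (take k (drop j x) @ [x'!p])"
      using lift_con[OF L jl] lift_con[OF L' jl] eqk p by simp
    moreover have lk: "length (take k (drop j x)) = k" using lx p less.prems by simp
    ultimately have "x!p = x'!p" using rp by blast
    then show ?thesis .
  qed
qed

primrec bld :: "(bool list \<Rightarrow> bool) \<Rightarrow> (nat \<Rightarrow> bool) \<Rightarrow> bool list \<Rightarrow> nat \<Rightarrow> bool list" where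
  "bld g t w 0 = w"
| "bld g t w (Suc m) = bld g t w m @ [g (drop m (bld g t w m)) \<noteq> t m]"

lemma bld_len: "length (bld g t w m) = length w + m"
  by (induction m) auto

lemma bld_prefix: "m' \<le> m \<Longrightarrow> \<exists>s. bld g t w m = bld g t w m' @ s"
proof (induction m)
  case 0 then show ?case by simp
next
  case (Suc m)
  show ?case
  proof (cases "m' = Suc m")
    case True then show ?thesis by simp
  next
    case False then have "m' \<le> m" using Suc by simp
    then obtain s where "bld g t w m = bld g t w m' @ s" using Suc by blast
    then show ?thesis by auto
  qed
qed

lemma bld_win: "j < m \<Longrightarrow> length w = k \<Longrightarrow>
   take (k+1) (drop j (bld g t w m)) = drop j (bld g t w j) @ [g (drop j (bld g t w j)) \<noteq> t j]"
proof -
  assume j: "j < m" and w: "length w = k"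
  obtain s where s: "bld g t w m = bld g t w (Suc j) @ s" using bld_prefix[of "Suc j" m g t w] j by (metis Suc_leI)
  have "length (drop j (bld g t w (Suc j))) = k + 1" using bld_len[of g t w "Suc j"] w by simp
  then have "take (k+1) (drop j (bld g t w m)) = drop j (bld g t w (Suc j))"
    using s bld_len[of g t w "Suc j"] by simp
  also have "\<dots> = drop j (bld g t w j) @ [g (drop j (bld g t w j)) \<noteq> t j]"
    using bld_len[of g t w j] by simp
  finally show ?thesis .
qed

lemma bld_take: "length w = k \<Longrightarrow> take k (bld g t w m) = w"
  using bld_prefix[of 0 m g t w] by auto

lemma recR:
  assumes Hd: "\<forall>x. length x = k + 1 \<longrightarrow> d x = ((x ! 0 \<noteq> h (take (k - 1) (drop 1 x))) \<noteq> x ! k)"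
  and k: "k \<ge> 1" and L: "cyc_lift n k d c w x" and j: "j < length c + n - 1"
  shows "x!(j+k) = ((x!j \<noteq> h (take (k-1) (drop (Suc j) x))) \<noteq> c!(j mod length c))"
proof -
  have jl: "j + k < length x" using lift_len[OF L] j by arith
  define u where "u = take k (drop j x) @ [x!(j+k)]"
  have lu: "length u = k+1" using jl u_def by simp
  have e1: "d u = c!(j mod length c)" using lift_con[OF L j] u_def by simp
  have e2: "u!0 = x!j" using k jl u_def by (simp add: nth_append)
  have e3: "u!k = x!(j+k)" using jl u_def by (simp add: nth_append)
  have e4: "take (k-1) (drop 1 u) = take (k-1) (drop (Suc j) x)"
    using k jl u_def by (simp add: drop_take)
  have e5: "d u = ((u ! 0 \<noteq> h (take (k - 1) (drop 1 u))) \<noteq> u ! k)" using Hd lu by blast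
  have "c!(j mod length c) = ((x!j \<noteq> h (take (k-1) (drop (Suc j) x))) \<noteq> x!(j+k))"
    using e5 unfolding e1 e2 e3 e4 .
  then show ?thesis by blast
qed

lemma win_eq:
  assumes L: "cyc_lift n k d c w x" and j: "j < length c" and i: "i < n"
  shows "cyc_window n c j ! i = d (take (k+1) (drop i (take (n+k) (drop j x))))"
proof -
  have "j + i < length c + n - 1" using j i by arith
  then have "d (take (k+1) (drop (j+i) x)) = c ! ((j+i) mod length c)" using L unfolding cyc_lift_def by blast
  moreover have "take (k+1) (drop i (take (n+k) (drop j x))) = take (k+1) (drop (j+i) x)"
    using i by (simp add: drop_take min_def add.commute)
  ultimately show ?thesis using i by (simp add: cyc_window_def)
qed

lemma dir2:
  assumes Hd: "\<forall>x. length x = k + 1 \<longrightarrow> d x = ((x ! 0 \<noteq> h (take (k - 1) (drop 1 x))) \<noteq> x ! k)"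
  and k: "k \<ge> 1" and n: "n \<ge> 1"
  shows "propD n k d"
  unfolding propD_def
proof (intro allI impI conjI)
  have dapp: "d (u@[b]) = ((u!0 \<noteq> h (drop 1 u)) \<noteq> b)" if "length u = k" for u b
  proof -
    have "d (u@[b]) = (((u@[b])!0 \<noteq> h (take (k-1) (drop 1 (u@[b])))) \<noteq> (u@[b])!k)"
      using Hd that by simp
    then show ?thesis using that k by (simp add: nth_append)
  qed
  have rp: "\<forall>u b1 b2. length u = k \<longrightarrow> d (u@[b1]) = d (u@[b2]) \<longrightarrow> b1 = b2"
    using dapp by auto
  fix c assume vc: "vdisj_cycle n c"
  have lc: "length c \<ge> 1" using vc by (simp add: vdisj_cycle_def)
  {
    fix w :: "bool list" assume w: "length w = k"
    define g where "g = (\<lambda>u::bool list. (u!0 \<noteq> h (drop 1 u)))"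
    define t where "t = (\<lambda>j. c!(j mod length c))"
    define x where "x = bld g t w (length c + n - 1)"
    have ex: "cyc_lift n k d c w x"
      unfolding cyc_lift_def
    proof (intro conjI allI impI)
      show "length x = k + length c + n - 1" using x_def bld_len[of g t w] w lc n by simp
      show "take k x = w" using x_def bld_take w by simp
      fix j assume j: "j < length c + n - 1"
      have "take (k + 1) (drop j x) = drop j (bld g t w j) @ [g (drop j (bld g t w j)) \<noteq> t j]"
        using bld_win[OF _ w] j x_def by simp
      moreover have "length (drop j (bld g t w j)) = k" using bld_len[of g t w j] w by simp
      moreover have "\<And>u. length u = k \<Longrightarrow> d (u @ [g u \<noteq> t j]) = t j"
      proof -
        fix u :: "bool list" assume "length u = k"
        then have "d (u @ [g u \<noteq> t j]) = (g u \<noteq> (g u \<noteq> t j))" using dapp g_def by simp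
        then show "d (u @ [g u \<noteq> t j]) = t j" by (cases "g u"; cases "t j") auto
      qed
      ultimately show "d (take (k + 1) (drop j x)) = c ! (j mod length c)"
        using t_def by simp
    qed
    show "\<exists>!x. cyc_lift n k d c w x"
    proof (rule ex1I[of _ x])
      show "cyc_lift n k d c w x" by (rule ex)
      fix y assume y: "cyc_lift n k d c w y"
      have ag: "\<forall>p. 0 \<le> p \<and> p < 0+k \<longrightarrow> y!p = x!p"
      proof (intro allI impI)
        fix p assume "0 \<le> p \<and> p < 0+k"
        then have "take k y ! p = take k x ! p" using y ex by (simp add: cyc_lift_def)
        then show "y!p = x!p" using \<open>0 \<le> p \<and> p < 0+k\<close> by simp
      qed
      show "y = x"
        using fwd[OF rp y ex ag] lift_len[OF y] lift_len[OF ex] by (intro nth_equalityI) auto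
    qed
  }
  fix w w' x x' j j'
  assume A: "length w = k \<and> length w' = k \<and>
            cyc_lift n k d c w x \<and> cyc_lift n k d c w' x' \<and>
            j < length c \<and> j' < length c \<and>
            take (n + k) (drop j x) = take (n + k) (drop j' x')"
  then have L: "cyc_lift n k d c w x" and L': "cyc_lift n k d c w' x'"
    and j: "j < length c" and j': "j' < length c"
    and E: "take (n + k) (drop j x) = take (n + k) (drop j' x')" by auto
  have lx: "length x = k + length c + n - 1" "length x' = k + length c + n - 1"
    using lift_len[OF L] lift_len[OF L'] by auto
  have "cyc_window n c j = cyc_window n c j'"
  proof (rule nth_equalityI)
    show "length (cyc_window n c j) = length (cyc_window n c j')" by (simp add: cyc_window_def)
    fix i assume "i < length (cyc_window n c j)"
    then have i: "i < n" by (simp add: cyc_window_def)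
    show "cyc_window n c j ! i = cyc_window n c j' ! i"
      using win_eq[OF L j i] win_eq[OF L' j' i] E by simp
  qed
  then have jj: "j = j'" using vc j j' unfolding vdisj_cycle_def inj_on_def by auto
  have base: "\<forall>p. j \<le> p \<and> p < j + k \<longrightarrow> x!p = x'!p"
  proof (intro allI impI)
    fix p assume p: "j \<le> p \<and> p < j + k"
    have "take (n + k) (drop j x) ! (p - j) = take (n + k) (drop j x') ! (p - j)" using E jj by simp
    moreover have q: "p - j < n + k" "p < length x" "p < length x'" using p lx j n by arith+
    moreover have "take (n + k) (drop j x) ! (p - j) = x ! p" using q p by simp
    moreover have "take (n + k) (drop j x') ! (p - j) = x' ! p" using q p by simp
    ultimately show "x!p = x'!p" by simp
  qed
  have down: "\<forall>p. j - m \<le> p \<and> p < j - m + k \<longrightarrow> x!p = x'!p" for m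
  proof (induction m)
    case 0 then show ?case using base by simp
  next
    case (Suc m)
    show ?case
    proof (cases "m < j")
      case False
      then have "j - Suc m = j - m" by simp
      then show ?thesis using Suc by simp
    next
      case True
      define i where "i = j - Suc m"
      have im: "j - m = Suc i" using True i_def by simp
      have il: "i < length c + n - 1" using i_def j n by arith
      have ik: "i + k < length x" using lx i_def j n by arith
      have tk: "take (k-1) (drop (Suc i) x) = take (k-1) (drop (Suc i) x')"
      proof (rule nth_equalityI)
        show "length (take (k-1) (drop (Suc i) x)) = length (take (k-1) (drop (Suc i) x'))"
          using lx by simp
        fix q assume "q < length (take (k-1) (drop (Suc i) x))"
        then have q: "q < k - 1" by simp
        have "x!(Suc i + q) = x'!(Suc i + q)" using Suc.IH im q by auto
        then show "take (k-1) (drop (Suc i) x) ! q = take (k-1) (drop (Suc i) x') ! q"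
          using q ik lx by simp
      qed
      have xk: "x!(i+k) = x'!(i+k)" using Suc.IH im k by auto
      have "x!i = x'!i"
        using recR[OF Hd k L il] recR[OF Hd k L' il] tk xk by auto
      note xi = this
      show ?thesis unfolding i_def[symmetric]
      proof (intro allI impI)
        fix p assume p: "i \<le> p \<and> p < i + k"
        show "x!p = x'!p"
        proof (cases "p = i")
          case True then show ?thesis using xi by simp
        next
          case False then have "Suc i \<le> p \<and> p < Suc i + k" using p by auto
          then show ?thesis using Suc.IH im by auto
        qed
      qed
    qed
  qed
  have "\<forall>p. p < k \<longrightarrow> x!p = x'!p" using down[of j] by simp
  then have "take k x = take k x'" using lx by (intro nth_equalityI) auto
  then show "w = w'" using L L' by (simp add: cyc_lift_def)
  show "j = j'" by (rule jj)
qed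

lemma dir1:
  assumes P: "propD n k d" and k: "k \<ge> 1" and n: "n \<ge> 1"
  shows "\<exists>h :: bool list \<Rightarrow> bool. \<forall>x. length x = k + 1 \<longrightarrow>
        d x = ((x ! 0 \<noteq> h (take (k - 1) (drop 1 x))) \<noteq> x ! k)"
proof -
  have PD: "(\<forall>w. length w = k \<longrightarrow> (\<exists>!x. cyc_lift n k d c w x)) \<and>
        (\<forall>w w' x x' j j'. length w = k \<and> length w' = k \<and>
            cyc_lift n k d c w x \<and> cyc_lift n k d c w' x' \<and>
            j < length c \<and> j' < length c \<and>
            take (n + k) (drop j x) = take (n + k) (drop j' x') \<longrightarrow> w = w' \<and> j = j')"
    if "vdisj_cycle n c" for c
    using spec[OF P[unfolded propD_def], of c] that by (rule mp)
  have PE: "\<exists>x. cyc_lift n k d c w x" if "vdisj_cycle n c" "length w = k" for c w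
    using conjunct1[OF PD[OF that(1)], rule_format, OF that(2)] by (rule ex1_implies_ex)
  have P1: "\<exists>b. d (u@[b]) = t" if u: "length u = k" for u t
  proof -
    have "vdisj_cycle n [t]" by (simp add: vdisj_cycle_def)
    then obtain x where L: "cyc_lift n k d [t] u x" using PE u by blast
    have "d (take k (drop 0 x) @ [x!(0+k)]) = [t] ! (0 mod length [t])"
      by (rule lift_con[OF L]) (use n in simp)
    moreover have "take k x = u" using L by (simp add: cyc_lift_def)
    ultimately show ?thesis by auto
  qed
  have tf: "d (u@[True]) \<noteq> d (u@[False])" if u: "length u = k" for u
  proof
    assume e: "d (u@[True]) = d (u@[False])"
    obtain b where "d (u@[b]) = (\<not> d (u@[True]))" using P1[OF u] by blast
    then show False using e by (cases b) auto
  qed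
  have rp: "\<forall>u b1 b2. length u = k \<longrightarrow> d (u@[b1]) = d (u@[b2]) \<longrightarrow> b1 = b2"
  proof (intro allI impI)
    fix u :: "bool list" and b1 b2 assume "length u = k" "d (u@[b1]) = d (u@[b2])"
    then show "b1 = b2" using tf by (cases b1; cases b2) auto
  qed
  have P2: "d (True#r@[False]) \<noteq> d (False#r@[False])" if r: "length r = k - 1" for r
  proof
    assume e: "d (True#r@[False]) = d (False#r@[False])"
    define t where "t = d (True#r@[False])"
    define c where "c = [t, \<not> t]"
    have cw0: "cyc_window n c 0 ! 0 = t" using n by (simp add: cyc_window_def c_def)
    have cw1: "cyc_window n c 1 ! 0 = (\<not> t)" using n by (simp add: cyc_window_def c_def)
    have "cyc_window n c 0 \<noteq> cyc_window n c 1" using cw0 cw1 by auto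
    then have vc: "vdisj_cycle n c"
      unfolding vdisj_cycle_def inj_on_def c_def
      by (auto simp: less_Suc_eq)
    have w1: "length (True#r) = k" and w2: "length (False#r) = k" using r k by auto
    obtain x where L: "cyc_lift n k d c (True#r) x" using PE[OF vc w1] by blast
    obtain x' where L': "cyc_lift n k d c (False#r) x'" using PE[OF vc w2] by blast
    have z: "0 < length c + n - 1" using c_def n by simp
    have tx: "take k x = True#r" and tx': "take k x' = False#r" using L L' by (auto simp: cyc_lift_def)
    have "d ((True#r) @ [x!k]) = t" using lift_con[OF L z] tx by (simp add: c_def)
    then have xk: "x!k = False" using rp w1 t_def by (metis append_Cons)
    have "d ((False#r) @ [x'!k]) = t" using lift_con[OF L' z] tx' by (simp add: c_def)
    then have xk': "x'!k = False" using rp w2 t_def e by (metis append_Cons)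
    have lx: "length x = k + length c + n - 1" "length x' = k + length c + n - 1"
      using lift_len[OF L] lift_len[OF L'] by auto
    have ag: "\<forall>p. 1 \<le> p \<and> p < 1 + k \<longrightarrow> x!p = x'!p"
    proof (intro allI impI)
      fix p assume p: "1 \<le> p \<and> p < 1 + k"
      show "x!p = x'!p"
      proof (cases "p = k")
        case True then show ?thesis using xk xk' by simp
      next
        case False
        then have pk: "p < k" using p by simp
        have "take k x ! p = take k x' ! p" using tx tx' p pk by (cases p) auto
        then show ?thesis using pk by simp
      qed
    qed
    have all: "x!p = x'!p" if "1 \<le> p" "p < length x" for p using fwd[OF rp L L' ag] that by blast
    have "take (n + k) (drop 1 x) = take (n + k) (drop 1 x')"
      by (rule nth_equalityI) (use lx all in auto)
    note eq = this
    have D: "\<forall>w w' x x' j j'. length w = k \<and> length w' = k \<and>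
            cyc_lift n k d c w x \<and> cyc_lift n k d c w' x' \<and>
            j < length c \<and> j' < length c \<and>
            take (n + k) (drop j x) = take (n + k) (drop j' x') \<longrightarrow> w = w' \<and> j = j'"
      using conjunct2[OF PD[OF vc]] .
    have "True#r = False#r \<and> (1::nat) = 1"
    proof (rule D[rule_format], intro conjI)
      show "(1::nat) < length c" "(1::nat) < length c" by (simp_all add: c_def)
    qed (fact w1 w2 L L' eq)+
    then have "True#r = False#r" by simp
    then show False by simp
  qed
  define h where "h = (\<lambda>r. d (False#r@[False]))"
  show ?thesis
  proof (rule exI[of _ h], intro allI impI)
    fix x :: "bool list" assume lx: "length x = k + 1"
    define r where "r = take (k-1) (drop 1 x)"
    have lr: "length r = k - 1" using r_def lx by simp
    have x0: "take (Suc k) x = take k x @ [x!k]" by (rule take_Suc_conv_app_nth) (use lx in simp)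
    have xa: "take (Suc k) x = x" using lx by simp
    have x1: "x = take k x @ [x!k]" using x0 unfolding xa .
    have x2: "take k x = x!0 # r" using lx k r_def by (cases x) (auto simp: take_Cons' drop_Suc)
    have lu: "length (x!0 # r) = k" using lr k by simp
    have "d x = d ((x!0 # r) @ [x!k])" using arg_cong[OF x1, of d] x2 by simp
    also have "\<dots> = (d ((x!0 # r) @ [False]) \<noteq> x!k)" using tf[OF lu] by (cases "x!k") auto
    also have "d ((x!0 # r) @ [False]) = (x!0 \<noteq> h r)" using P2[OF lr] h_def by (cases "x!0") auto
    finally show "d x = ((x ! 0 \<noteq> h (take (k - 1) (drop 1 x))) \<noteq> x ! k)" using r_def by simp
  qed
qed

theorem mainTheorem4:
  fixes n k :: nat and d :: "bool list \<Rightarrow> bool"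
  assumes "n \<ge> 1" and "k \<ge> 1"
  shows "propD n k d \<longleftrightarrow>
    (\<exists>h :: bool list \<Rightarrow> bool. \<forall>x. length x = k + 1 \<longrightarrow>
        d x = ((x ! 0 \<noteq> h (take (k - 1) (drop 1 x))) \<noteq> x ! k))"
proof
  assume "propD n k d"
  then show "\<exists>h :: bool list \<Rightarrow> bool. \<forall>x. length x = k + 1 \<longrightarrow>
        d x = ((x ! 0 \<noteq> h (take (k - 1) (drop 1 x))) \<noteq> x ! k)"
    by (rule dir1[OF _ assms(2) assms(1)])
next
  assume "\<exists>h :: bool list \<Rightarrow> bool. \<forall>x. length x = k + 1 \<longrightarrow>
        d x = ((x ! 0 \<noteq> h (take (k - 1) (drop 1 x))) \<noteq> x ! k)"
  then obtain h :: "bool list \<Rightarrow> bool" where "\<forall>x. length x = k + 1 \<longrightarrow>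
        d x = ((x ! 0 \<noteq> h (take (k - 1) (drop 1 x))) \<noteq> x ! k)" by blast
  then show "propD n k d" by (rule dir2[OF _ assms(2) assms(1)])
qed

end
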